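(* Let $A(x)=\sum_{i=0}^d a_ix^i\in\mathbb{Z}[x]$ have degree $d\ge1$ with $a_0\neq0$, let $m>d$, and let $N=(N_{i,j})$ be the $d\times m$ rational matrix with $N_{i,j}=\delta_{ij}$ for $1\le i,j\le d$ and whose rows are linear recurrences determined by $A$ (i.e. $\sum_{k=0}^d a_kN_{i,j+k}=0$ for $1\le j\le m-d$). Let $p$ be a prime and let $w$ be the abscissa of a vertex of the $p$-adic Newton polygon of $A$. Then the $d\times d$ submatrix of $N$ formed by the columns $1,2,\dots,w,\ m-d+w+1,\dots,m$ is nonsingular. Equivalently, the $(m-d)\times(m-d)$ matrix $U=(a_{w+i-j})_{1\le i,j\le m-d}$ (with $a_k=0$ for $k<0$ or $k>d$) is nonsingular.
   Context: The $p$-adic Newton polygon of $A$ is the lower boundary of the convex hull of the points $(i,v_p(a_i))$, $0\le i\le d$, where $v_p$ is the $p$-adic valuation; its vertices have abscissae $0=w_0<w_1<\dots<w_r=d$. *)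

theory Defs
  imports "Jordan_Normal_Form.Determinant" "HOL-Computational_Algebra.Computational_Algebra"
begin

text \<open>p-adic valuation of the coefficients: v_p(a) = multiplicity p a (for a nonzero).
  The p-adic Newton polygon of A is the lower boundary of the convex hull of the points
  (i, v_p(a_i)) with a_i nonzero. An abscissa w is the abscissa of a vertex of this lower
  boundary iff a_w is nonzero and the point (w, v_p(a_w)) is strictly supported from below
  by a line, i.e. all other points lie strictly above some line through it.\<close>

definition newton_vertex :: "nat \<Rightarrow> int poly \<Rightarrow> nat \<Rightarrow> bool" where
  "newton_vertex p A w \<longleftrightarrow>
     w \<le> degree A \<and> coeff A w \<noteq> 0 \<and>
     (\<exists>s::real. \<forall>j \<le> degree A. coeff A j \<noteq> 0 \<and> j \<noteq> w \<longrightarrow>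
        real (multiplicity (int p) (coeff A j)) >
        real (multiplicity (int p) (coeff A w)) + s * (real j - real w))"

end

theory Submission imports Defs begin

lemma U_nonsing:
  fixes A :: "int poly" and n w p :: nat
  assumes pr: "prime p" and nv: "newton_vertex p A w"
  shows "det (mat n n (\<lambda>(i, j).
            if int w + int i - int j \<ge> 0 then coeff A (nat (int w + int i - int j)) else 0)) \<noteq> 0"
proof
  define M where "M = mat n n (\<lambda>(i, j).
            if int w + int i - int j \<ge> 0 then coeff A (nat (int w + int i - int j)) else (0::int))"
  assume det0: "det M = 0"
  define P where "P = int p"
  have prP: "prime P" using pr by (simp add: P_def)
  define e where "e = multiplicity P (coeff A w)"
  have aw: "coeff A w \<noteq> 0" and wd: "w \<le> degree A" using nv by (auto simp: newton_vertex_def)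
  obtain s :: real where s: "\<And>j. j \<le> degree A \<Longrightarrow> coeff A j \<noteq> 0 \<Longrightarrow> j \<noteq> w \<Longrightarrow>
        real (multiplicity P (coeff A j)) > real e + s * (real j - real w)"
    using nv unfolding newton_vertex_def P_def e_def by blast
  have Mc: "M \<in> carrier_mat n n" by (simp add: M_def)
  have Mij: "\<And>i j. i < n \<Longrightarrow> j < n \<Longrightarrow> M $$ (i,j) = (if int w + int i - int j \<ge> 0 then coeff A (nat (int w + int i - int j)) else 0)"
    by (simp add: M_def)
  let ?S = "{\<sigma>. \<sigma> permutes {0..<n}}"
  have key: "P ^ (n*e+1) dvd (\<Prod>i = 0..<n. M $$ (i, \<sigma> i))" if sig: "\<sigma> \<in> ?S" "\<sigma> \<noteq> id" for \<sigma>
  proof (cases "\<exists>i\<in>{0..<n}. M $$ (i, \<sigma> i) = 0")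
    case True
    then show ?thesis by (simp add: prod_zero)
  next
    case False
    have perm: "\<sigma> permutes {0..<n}" using sig by simp
    have sl: "\<And>i. i < n \<Longrightarrow> \<sigma> i < n" using perm by (meson atLeastLessThan_iff le0 permutes_in_image)
    define k where "k i = nat (int w + int i - int (\<sigma> i))" for i
    have nz: "\<And>i. i < n \<Longrightarrow> int w + int i - int (\<sigma> i) \<ge> 0 \<and> coeff A (k i) \<noteq> 0"
    proof -
      fix i assume i: "i < n"
      have "M $$ (i, \<sigma> i) \<noteq> 0" using False i by auto
      then show "int w + int i - int (\<sigma> i) \<ge> 0 \<and> coeff A (k i) \<noteq> 0"
        using Mij[OF i sl[OF i]] by (auto simp: k_def split: if_splits)
    qed
    have Mk: "\<And>i. i < n \<Longrightarrow> M $$ (i, \<sigma> i) = coeff A (k i)"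
      using Mij sl nz k_def by auto
    have kd: "\<And>i. i < n \<Longrightarrow> k i \<le> degree A" using nz le_degree by blast
    have kr: "\<And>i. i < n \<Longrightarrow> real (k i) = real w + real i - real (\<sigma> i)"
      using nz k_def by (smt (verit, ccfv_SIG) int_nat_eq of_int_of_nat_eq of_int_diff of_int_add of_nat_nat)
    have sums: "(\<Sum>i = 0..<n. real (\<sigma> i)) = (\<Sum>i = 0..<n. real i)"
      using sum.permute[OF perm, of real] by (simp add: comp_def)
    have s0: "(\<Sum>i = 0..<n. s * (real (k i) - real w)) = 0"
    proof -
      have "(\<Sum>i = 0..<n. s * (real (k i) - real w)) = (\<Sum>i = 0..<n. s * (real i - real (\<sigma> i)))"
        by (rule sum.cong) (auto simp: kr)
      also have "\<dots> = s * ((\<Sum>i = 0..<n. real i) - (\<Sum>i = 0..<n. real (\<sigma> i)))"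
        by (simp add: sum_distrib_left sum_subtractf right_diff_distrib)
      finally show ?thesis using sums by simp
    qed
    obtain i0 where i0: "i0 < n" "\<sigma> i0 \<noteq> i0"
      using sig perm by (metis atLeastLessThan_iff eq_id_iff permutes_def)
    have ki0: "k i0 \<noteq> w" using kr[OF i0(1)] i0(2) by auto
    define v where "v i = multiplicity P (coeff A (k i))" for i
    have le: "\<And>i. i \<in> {0..<n} \<Longrightarrow> real e + s * (real (k i) - real w) \<le> real (v i)"
    proof -
      fix i assume i: "i \<in> {0..<n}"
      show "real e + s * (real (k i) - real w) \<le> real (v i)"
      proof (cases "k i = w")
        case True then show ?thesis by (simp add: v_def e_def)
      next
        case False then show ?thesis using s[of "k i"] kd nz i by (fastforce simp: v_def)
      qed
    qed
    have lt: "real e + s * (real (k i0) - real w) < real (v i0)"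
      using s[of "k i0"] kd nz i0 ki0 by (fastforce simp: v_def)
    have "(\<Sum>i = 0..<n. real e + s * (real (k i) - real w)) < (\<Sum>i = 0..<n. real (v i))"
      by (rule sum_strict_mono_ex1) (use le lt i0 in auto)
    also have "(\<Sum>i = 0..<n. real e + s * (real (k i) - real w)) = real (n*e)"
      using s0 by (simp add: sum.distrib)
    finally have "real (n*e) < real (\<Sum>i = 0..<n. v i)" by (simp only: of_nat_sum)
    then have "n*e < (\<Sum>i = 0..<n. v i)" by linarith
    then have d1: "P ^ (n*e+1) dvd P ^ (\<Sum>i = 0..<n. v i)"
      by (intro le_imp_power_dvd) simp
    have d2: "P ^ (\<Sum>i = 0..<n. v i) dvd (\<Prod>i = 0..<n. M $$ (i, \<sigma> i))"
      unfolding power_sum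
      by (rule prod_dvd_prod) (simp add: Mk v_def multiplicity_dvd)
    show ?thesis using d1 d2 dvd_trans by blast
  qed
  have fin: "finite ?S" by (simp add: finite_permutations)
  have idS: "id \<in> ?S" by (simp add: permutes_id)
  define R where "R = (\<Sum>\<sigma> \<in> ?S - {id}. signof \<sigma> * (\<Prod>i = 0..<n. M $$ (i, \<sigma> i)))"
  have "det M = signof id * (\<Prod>i = 0..<n. M $$ (i, id i)) + R"
    unfolding det_def'[OF Mc] R_def by (subst sum.remove[OF fin idS]) simp
  moreover have "(\<Prod>i = 0..<n. M $$ (i, id i)) = coeff A w ^ n"
    by (simp add: Mij)
  ultimately have "coeff A w ^ n + R = 0" using det0 by simp
  then have eqR: "coeff A w ^ n = - R" by (simp add: eq_neg_iff_add_eq_0)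
  have "P ^ (n*e+1) dvd R" unfolding R_def
    by (rule dvd_sum) (use key in auto)
  then have "P ^ (n*e+1) dvd coeff A w ^ n" unfolding eqR by (simp only: dvd_minus_iff)
  then have "multiplicity P (coeff A w ^ n) \<ge> n*e+1"
  proof -
    assume h: "P ^ (n*e+1) dvd coeff A w ^ n"
    have "coeff A w ^ n \<noteq> 0" using aw by simp
    moreover have "\<not> is_unit P" using prP not_prime_unit by blast
    ultimately show ?thesis using h multiplicity_geI by blast
  qed
  moreover have "multiplicity P (coeff A w ^ n) = n * e"
    unfolding e_def by (rule prime_elem_multiplicity_power_distrib[OF prime_imp_prime_elem[OF prP] aw])
  ultimately show False by simp
qed

theorem mainTheorem6:
  fixes A :: "int poly" and d m w p :: nat and N :: "rat mat"
  assumes "degree A = d" and "d \<ge> 1" and "coeff A 0 \<noteq> 0" and "m > d"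
    and "dim_row N = d" and "dim_col N = m"
    and "\<forall>i<d. \<forall>j<d. N $$ (i, j) = (if i = j then 1 else 0)"
    and "\<forall>i<d. \<forall>j<m - d. (\<Sum>k\<le>d. of_int (coeff A k) * N $$ (i, j + k)) = 0"
    and "prime p" and "newton_vertex p A w"
  shows "det (mat d d (\<lambda>(i, j). N $$ (i, if j < w then j else m - d + j))) \<noteq> 0
       \<and> det (mat (m - d) (m - d) (\<lambda>(i, j).
            if int w + int i - int j \<ge> 0 then coeff A (nat (int w + int i - int j)) else 0)) \<noteq> 0"
proof
  note degA = assms(1) and md = assms(4) and Nid = assms(7) and rec = assms(8)
  define n where "n = m - d"
  define U where "U = mat n n (\<lambda>(i, j).
            if int w + int i - int j \<ge> 0 then coeff A (nat (int w + int i - int j)) else (0::int))"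
  have Unz: "det U \<noteq> 0" unfolding U_def by (rule U_nonsing[OF assms(9,10)])
  then show "det (mat (m - d) (m - d) (\<lambda>(i, j).
            if int w + int i - int j \<ge> 0 then coeff A (nat (int w + int i - int j)) else 0)) \<noteq> 0"
    by (simp add: U_def n_def)
  have wd: "w \<le> d" using assms(10) degA by (simp add: newton_vertex_def)
  define a' where "a' t = (if t \<ge> 0 then coeff A (nat t) else 0)" for t :: int
  define Ut :: "rat mat" where "Ut = mat n n (\<lambda>(j, l). of_int (a' (int w + int l - int j)))"
  have Ut_eq: "Ut = transpose_mat (map_mat of_int U)"
    by (rule eq_matI) (auto simp: Ut_def U_def a'_def)
  have Utc: "Ut \<in> carrier_mat n n" by (simp add: Ut_def)
  have "det Ut = of_int (det U)"
    unfolding Ut_eq by (subst det_transpose[of _ n]) (auto simp: U_def of_int_hom.hom_det)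
  with Unz have Utnz: "det Ut \<noteq> 0" by simp
  define D where "D = mat d d (\<lambda>(i, j). N $$ (i, if j < w then j else m - d + j))"
  show "det (mat d d (\<lambda>(i, j). N $$ (i, if j < w then j else m - d + j))) \<noteq> 0"
    unfolding D_def[symmetric]
  proof
    assume "det D = 0"
    then have "det (transpose_mat D) = 0" by (subst det_transpose[of _ d]) (auto simp: D_def)
    then obtain v where v: "v \<in> carrier_vec d" "v \<noteq> 0\<^sub>v d" "transpose_mat D *\<^sub>v v = 0\<^sub>v d"
      using det_0_iff_vec_prod_zero_field[of "transpose_mat D" d] by (auto simp: D_def)
    define x where "x c = (\<Sum>i<d. v $ i * N $$ (i, c))" for c
    have Dv: "(\<Sum>i<d. v $ i * N $$ (i, if j < w then j else m - d + j)) = 0" if j: "j < d" for j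
    proof -
      have "(transpose_mat D *\<^sub>v v) $ j = 0" using v(3) j by simp
      then show ?thesis using j v(1)
        by (simp add: D_def scalar_prod_def row_def lessThan_atLeast0 mult.commute)
    qed
    have x0: "x c = 0" if "c < m" "c < w \<or> c \<ge> m - d + w" for c
    proof (cases "c < w")
      case True then show ?thesis using Dv[of c] wd by (simp add: x_def)
    next
      case False
      then have "c - (m - d) < d" "\<not> c - (m - d) < w" "m - d + (c - (m - d)) = c" using that md by auto
      then show ?thesis using Dv[of "c - (m - d)"] by (simp add: x_def)
    qed
    have xv: "x c = v $ c" if "c < d" for c
    proof -
      have "x c = (\<Sum>i<d. v $ i * (if i = c then 1 else 0))"
        unfolding x_def using Nid that by (intro sum.cong) auto
      also have "\<dots> = (\<Sum>i<d. if i = c then v $ c else 0)" by (rule sum.cong) auto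
      also have "\<dots> = v $ c" using that by simp
      finally show ?thesis .
    qed
    have xrec: "(\<Sum>k\<le>d. of_int (coeff A k) * x (j + k)) = 0" if "j < n" for j
    proof -
      have "(\<Sum>k\<le>d. of_int (coeff A k) * x (j + k)) =
          (\<Sum>i<d. v $ i * (\<Sum>k\<le>d. of_int (coeff A k) * N $$ (i, j + k)))"
        unfolding x_def by (simp add: sum_distrib_left sum_distrib_right mult_ac sum.swap[of _ "{..d}"])
      also have "\<dots> = 0" using rec that n_def by simp
      finally show ?thesis .
    qed
    define y where "y = vec n (\<lambda>l. x (w + l))"
    have "Ut *\<^sub>v y = 0\<^sub>v n"
    proof (rule eq_vecI)
      fix j assume j: "j < dim_vec (0\<^sub>v n :: rat vec)"
      then have jn: "j < n" by simp
      define F where "F c = of_int (a' (int c - int j)) * x c" for c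
      have "(Ut *\<^sub>v y) $ j = (\<Sum>l = 0..<n. F (l + w))"
        using jn by (simp add: Ut_def y_def scalar_prod_def row_def F_def add.commute)
      also have "\<dots> = (\<Sum>c = w..<n + w. F c)"
        using sum.shift_bounds_nat_ivl[of F 0 w n] by simp
      also have "\<dots> = (\<Sum>c = 0..<m. F c)"
        by (rule sum.mono_neutral_left) (use wd md n_def x0 in \<open>auto simp: F_def\<close>)
      also have "\<dots> = (\<Sum>c = j..<d + 1 + j. F c)"
      proof (rule sum.mono_neutral_right)
        show "{j..<d + 1 + j} \<subseteq> {0..<m}" using jn n_def md by auto
        show "\<forall>i\<in>{0..<m} - {j..<d + 1 + j}. F i = 0"
        proof
          fix c assume c: "c \<in> {0..<m} - {j..<d + 1 + j}"
          show "F c = 0"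
          proof (cases "c < j")
            case True then show ?thesis by (simp add: F_def a'_def)
          next
            case False
            then have "nat (int c - int j) > degree A" using c degA by auto
            then show ?thesis using False by (simp add: F_def a'_def coeff_eq_0)
          qed
        qed
      qed simp
      also have "\<dots> = (\<Sum>k = 0..<d + 1. F (k + j))"
        using sum.shift_bounds_nat_ivl[of F 0 j "d+1"] by simp
      also have "\<dots> = (\<Sum>k\<le>d. of_int (coeff A k) * x (j + k))"
        by (rule sum.cong) (auto simp: F_def a'_def add.commute)
      also have "\<dots> = 0" using xrec jn by simp
      finally show "(Ut *\<^sub>v y) $ j = 0\<^sub>v n $ j" using jn by simp
    qed (simp add: Ut_def)
    moreover have "y \<in> carrier_vec n" by (simp add: y_def)
    ultimately have y0: "y = 0\<^sub>v n"
      using det_0_iff_vec_prod_zero_field[OF Utc] Utnz by blast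
    have xall: "x c = 0" if "c < m" for c
    proof (cases "c < w \<or> c \<ge> m - d + w")
      case True then show ?thesis using x0 that by blast
    next
      case False
      then have "c - w < n" "w + (c - w) = c" using n_def by auto
      then show ?thesis using y0 unfolding y_def by (metis index_vec index_zero_vec(1))
    qed
    have "v = 0\<^sub>v d"
      by (rule eq_vecI) (use v(1) xv xall md in auto)
    with v(2) show False by simp
  qed
qed

end
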